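(* Let $\lambda\mapsto N(\lambda),M(\lambda)\in\mathbb{R}^{2m\times2m}$ be continuously differentiable in a real parameter $\lambda$, write $\partial=d/d\lambda$, and define $\alpha,\beta,\gamma,F_2,G_2,F_3$ (depending on $\lambda$ and $t$) by $$\begin{bmatrix}\alpha(t)&\beta(t)&\gamma(t)\\0&F_2(t)&G_2(t)\\0&0&F_3(t)\end{bmatrix}:=\exp\!\left(\begin{bmatrix}-N^T&MJ&0\\0&-N^T&M\\0&0&N\end{bmatrix}t\right).$$ Assume $M=M^T$, $F_2(s)^TF_3(s)=I$ and $\partial F_3(s)=-JG_2(s)$ for all $s\in[0,H]$ and all $\lambda$. Then $$\partial G_2(H)=F_2(H)\Big(-\big(F_3(H)^T\gamma(H)\big)^T-F_3(H)^T\gamma(H)+\int_0^HF_3(s)^T\,\partial M\,F_3(s)\,ds-\big(-JG_2(H)\big)^TG_2(H)\Big).$$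
   Context: $J=\begin{bmatrix}0&I_m\\-I_m&0\end{bmatrix}\in\mathbb{R}^{2m\times2m}$. From the definition, $F_2(t)=\exp(-N^Tt)$, $F_3(t)=\exp(Nt)$ and $F_3(t)^TG_2(t)=\int_0^t\exp(N^Ts)M\exp(Ns)\,ds$. *)

theory Defs
  imports "HOL-Analysis.Analysis"
begin

text \<open>Square matrices are indexed by finite types. A 2m x 2m matrix is indexed by
  the sum type 'm + 'm; the 6m x 6m block matrix by ('m+'m) + ('m+'m) + ('m+'m).\<close>

primrec mpow :: "real^'n::finite^'n \<Rightarrow> nat \<Rightarrow> real^'n^'n" where
  "mpow A 0 = mat 1"
| "mpow A (Suc k) = A ** mpow A k"

definition mexp :: "real^'n::finite^'n \<Rightarrow> real^'n^'n" where
  "mexp A = (\<Sum>k. (1 / fact k) *\<^sub>R mpow A k)"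

text \<open>The symplectic matrix J = [[0, I], [-I, 0]].\<close>
definition Jmat :: "real^('m::finite + 'm)^('m + 'm)" where
  "Jmat = (\<chi> i j. case (i, j) of
      (Inl a, Inr b) \<Rightarrow> (if a = b then 1 else 0)
    | (Inr a, Inl b) \<Rightarrow> (if a = b then -1 else 0)
    | _ \<Rightarrow> 0)"

definition block3 ::
  "real^'n::finite^'n \<Rightarrow> real^'n^'n \<Rightarrow> real^'n^'n \<Rightarrow>
   real^'n^'n \<Rightarrow> real^'n^'n \<Rightarrow> real^'n^'n \<Rightarrow>
   real^'n^'n \<Rightarrow> real^'n^'n \<Rightarrow> real^'n^'n \<Rightarrow> real^('n + 'n + 'n)^('n + 'n + 'n)" where
  "block3 A11 A12 A13 A21 A22 A23 A31 A32 A33 = (\<chi> i j. case (i, j) of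
      (Inl a, Inl b) \<Rightarrow> A11 $ a $ b
    | (Inl a, Inr (Inl b)) \<Rightarrow> A12 $ a $ b
    | (Inl a, Inr (Inr b)) \<Rightarrow> A13 $ a $ b
    | (Inr (Inl a), Inl b) \<Rightarrow> A21 $ a $ b
    | (Inr (Inl a), Inr (Inl b)) \<Rightarrow> A22 $ a $ b
    | (Inr (Inl a), Inr (Inr b)) \<Rightarrow> A23 $ a $ b
    | (Inr (Inr a), Inl b) \<Rightarrow> A31 $ a $ b
    | (Inr (Inr a), Inr (Inl b)) \<Rightarrow> A32 $ a $ b
    | (Inr (Inr a), Inr (Inr b)) \<Rightarrow> A33 $ a $ b)"

definition blk :: "nat \<Rightarrow> nat \<Rightarrow> real^('n::finite + 'n + 'n)^('n + 'n + 'n) \<Rightarrow> real^'n^'n" where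
  "blk p q X = (\<chi> a b.
     let emb = (\<lambda>r (x::'n). if r = (1::nat) then Inl x else if r = 2 then Inr (Inl x) else Inr (Inr x))
     in X $ emb p a $ emb q b)"

definition gen :: "real^('m::finite+'m)^('m+'m) \<Rightarrow> real^('m+'m)^('m+'m)
    \<Rightarrow> real^(('m+'m) + ('m+'m) + ('m+'m))^(('m+'m) + ('m+'m) + ('m+'m))" where
  "gen N M = block3 (- transpose N) (M ** Jmat) 0  0 (- transpose N) M  0 0 N"

definition Emat where "Emat N M t = mexp (t *\<^sub>R gen N M)"

definition alpha where "alpha N M t = blk 1 1 (Emat N M t)"
definition beta where "beta N M t = blk 1 2 (Emat N M t)"
definition gamma where "gamma N M t = blk 1 3 (Emat N M t)"
definition F2 where "F2 N M t = blk 2 2 (Emat N M t)"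
definition G2 where "G2 N M t = blk 2 3 (Emat N M t)"
definition F3 where "F3 N M t = blk 3 3 (Emat N M t)"

end

theory Submission
  imports Defs
begin


lemma linear_mm_left: "linear (\<lambda>A::real^'n^'m. A ** (B::real^'p^'n))"
  by (rule linearI) (auto simp: vec_eq_iff matrix_matrix_mult_def sum.distrib algebra_simps sum_distrib_left)

lemma linear_mm_right: "linear (\<lambda>B::real^'p^'n. (A::real^'n^'m) ** B)"
  by (rule linearI) (auto simp: vec_eq_iff matrix_matrix_mult_def sum.distrib algebra_simps sum_distrib_left)

lemma bilinear_mm: "bilinear ((**) :: real^'n^'m \<Rightarrow> real^'p^'n \<Rightarrow> real^'p^'m)"
  unfolding bilinear_def using linear_mm_left linear_mm_right by blast

lemma bb_mm: "bounded_bilinear ((**) :: real^'n^'m \<Rightarrow> real^'p^'n \<Rightarrow> real^'p^'m)"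
  using bilinear_mm bilinear_conv_bounded_bilinear by blast

lemma bl_transpose: "bounded_linear (transpose :: real^'n^'m \<Rightarrow> real^'m^'n)"
  by (rule linear_conv_bounded_linear[THEN iffD1], rule linearI)
     (auto simp: vec_eq_iff transpose_def)

lemma mm_neg_left: "(- A) ** (B::real^'p^'n) = - (A ** B)" for A :: "real^'n^'m"
  using linear_neg[OF linear_mm_left] by metis
lemma mm_neg_right: "A ** (- B::real^'p^'n) = - (A ** B)" for A :: "real^'n^'m"
  using linear_neg[OF linear_mm_right] by metis
lemma mm_add_left: "(A + C) ** (B::real^'p^'n) = A ** B + C ** B" for A :: "real^'n^'m"
  using linear_add[OF linear_mm_left] by metis
lemma mm_diff_left: "(A - C) ** (B::real^'p^'n) = A ** B - C ** B" for A :: "real^'n^'m"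
  using linear_diff[OF linear_mm_left] by metis
lemma mm_diff_right: "A ** (B - C::real^'p^'n) = A ** B - A ** C" for A :: "real^'n^'m"
  using linear_diff[OF linear_mm_right] by metis
lemma transpose_neg: "transpose (- A) = - transpose (A::real^'n^'m)"
  by (simp add: vec_eq_iff transpose_def)
lemma transpose_add: "transpose (A + B) = transpose A + transpose (B::real^'n^'m)"
  by (simp add: vec_eq_iff transpose_def)
lemma transpose_diff: "transpose (A - B) = transpose A - transpose (B::real^'n^'m)"
  by (simp add: vec_eq_iff transpose_def)

lemma mpow_bound:
  obtains K :: real where "K > 0" "\<And>A n. norm (mpow (A::real^'n::finite^'n) n) \<le> norm (mat 1::real^'n^'n) * (K * norm A) ^ n"
proof -
  obtain K where K: "K > 0" "\<And>a b. norm ((a::real^'n^'n) ** (b::real^'n^'n)) \<le> norm a * norm b * K"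
    using bounded_bilinear.pos_bounded[OF bb_mm] by blast
  have "norm (mpow (A::real^'n::finite^'n) n) \<le> norm (mat 1::real^'n^'n) * (K * norm A) ^ n" for A n
  proof (induction n)
    case 0 then show ?case by simp
  next
    case (Suc n)
    have "norm (mpow A (Suc n)) \<le> norm A * norm (mpow A n) * K" using K(2) by simp
    also have "\<dots> \<le> norm A * (norm (mat 1::real^'n^'n) * (K * norm A) ^ n) * K"
      using Suc K(1) by (simp add: mult_left_mono mult_right_mono)
    also have "\<dots> = norm (mat 1::real^'n^'n) * (K * norm A) ^ Suc n" by (simp add: algebra_simps)
    finally show ?case .
  qed
  with K(1) that show ?thesis by blast
qed

lemma mexp_summable: "summable (\<lambda>k. (1 / fact k) *\<^sub>R mpow (A::real^'n::finite^'n) k)"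
proof -
  obtain K where K: "K > 0" "\<And>A n. norm (mpow (A::real^'n::finite^'n) n) \<le> norm (mat 1::real^'n^'n) * (K * norm A) ^ n"
    using mpow_bound by blast
  show ?thesis
  proof (rule summable_comparison_test)
    show "\<exists>N. \<forall>n\<ge>N. norm ((1 / fact n) *\<^sub>R mpow A n) \<le> norm (mat 1::real^'n^'n) * (inverse (fact n) * (K * norm A) ^ n)"
      using K(2)[of A] by (auto simp: divide_simps mult.commute)
    show "summable (\<lambda>n. norm (mat 1::real^'n^'n) * (inverse (fact n) * (K * norm A) ^ n))"
      by (intro summable_mult summable_exp)
  qed
qed

lemma mexp_sums: "(\<lambda>k. (1 / fact k) *\<^sub>R mpow (A::real^'n::finite^'n) k) sums mexp A"
  unfolding mexp_def using mexp_summable summable_sums by blast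

lemma continuous_on_mpow: "continuous_on S (\<lambda>x. mpow (f x) n)" if "continuous_on S f"
  for f :: "_ \<Rightarrow> real^'n::finite^'n"
proof (induction n)
  case 0 then show ?case by (simp add: continuous_on_const)
next
  case (Suc n) then show ?case
    using bounded_bilinear.continuous_on[OF bb_mm that] by simp
qed

lemma mexp_isCont: "isCont mexp (A0::real^'n::finite^'n)"
proof -
  obtain K where K: "K > 0" "\<And>A n. norm (mpow (A::real^'n::finite^'n) n) \<le> norm (mat 1::real^'n^'n) * (K * norm A) ^ n"
    using mpow_bound by blast
  define R where "R = norm A0 + 1"
  have ul: "uniform_limit (ball 0 R) (\<lambda>n X. \<Sum>i<n. (1 / fact i) *\<^sub>R mpow (X::real^'n^'n) i)
      (\<lambda>X. suminf (\<lambda>i. (1 / fact i) *\<^sub>R mpow X i)) sequentially"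
  proof (rule Weierstrass_m_test)
    fix n and X :: "real^'n^'n" assume "X \<in> ball 0 R"
    then have X: "norm X \<le> R" by simp
    have "norm ((1 / fact n) *\<^sub>R mpow X n) = inverse (fact n) * norm (mpow X n)" by (simp add: divide_inverse)
    also have "\<dots> \<le> inverse (fact n) * (norm (mat 1::real^'n^'n) * (K * norm X) ^ n)"
      using K(2) by (intro mult_left_mono) auto
    also have "\<dots> \<le> inverse (fact n) * (norm (mat 1::real^'n^'n) * (K * R) ^ n)"
      using X K(1) by (intro mult_left_mono power_mono) auto
    finally show "norm ((1 / fact n) *\<^sub>R mpow X n) \<le> norm (mat 1::real^'n^'n) * (inverse (fact n) * (K * R) ^ n)"
      by (simp add: algebra_simps)
  next
    show "summable (\<lambda>n. norm (mat 1::real^'n^'n) * (inverse (fact n) * (K * R) ^ n))"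
      by (intro summable_mult summable_exp)
  qed
  have "continuous_on (ball 0 R) (mexp::real^'n^'n \<Rightarrow> _)"
    unfolding mexp_def[abs_def]
    by (rule uniform_limit_theorem[OF _ ul])
       (auto intro!: always_eventually continuous_on_sum continuous_on_scaleR continuous_on_const
         continuous_on_mpow continuous_on_id)
  moreover have "A0 \<in> ball 0 R" by (simp add: R_def)
  ultimately show ?thesis using continuous_on_eq_continuous_at open_ball by blast
qed

lemma continuous_on_mexp: "continuous_on S (\<lambda>x. mexp (f x))" if "continuous_on S f"
  for f :: "_ \<Rightarrow> real^'n::finite^'n"
proof -
  have "continuous_on (f ` S) mexp"
    using mexp_isCont by (intro continuous_at_imp_continuous_on) auto
  then show ?thesis using continuous_on_compose[OF that, of mexp] by (simp add: o_def)
qed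



lemma mpow_scale: "mpow (t *\<^sub>R A) k = t ^ k *\<^sub>R mpow (A::real^'n::finite^'n) k"
  by (induction k) (simp_all add: scalar_matrix_assoc[symmetric] matrix_scalar_ac)

lemma mexp_deriv:
  "((\<lambda>t. mexp (t *\<^sub>R A)) has_vector_derivative A ** mexp (t *\<^sub>R A)) (at t)"
  for A :: "real^'n::finite^'n"
proof -
  obtain K where K: "K > 0" "\<And>A n. norm (mpow (A::real^'n::finite^'n) n) \<le> norm (mat 1::real^'n^'n) * (K * norm A) ^ n"
    using mpow_bound by blast
  define c where "c = norm (mat 1::real^'n^'n)"
  define a where "a = norm A"
  define R where "R = \<bar>t\<bar> + 1"
  define S where "S = ball (0::real) R"
  define f where "f n x = (x ^ n / fact n) *\<^sub>R mpow A n" for n x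
  define d where "d n x = (of_nat n * x ^ (n - 1) / fact n) *\<^sub>R mpow A n" for n x
  define G where "G x = (\<Sum>i. d i x)" for x
  define Mb where "Mb n = (if n = 0 then 0 else inverse (fact (n - 1)) * R ^ (n - 1) * (c * (K * a) ^ n))" for n
  have c0: "c \<ge> 0" by (simp add: c_def)
  have dSuc: "d (Suc j) x = (x ^ j / fact j) *\<^sub>R mpow A (Suc j)" for j x
  proof -
    have "of_nat (Suc j) * x ^ (Suc j - 1) / fact (Suc j) = x ^ j / (fact j :: real)"
      by (simp add: fact_Suc del: of_nat_Suc)
    then show ?thesis by (simp only: d_def)
  qed
  have der: "(f n has_derivative (\<lambda>h. h *\<^sub>R d n x)) (at x within S)" for n x
  proof -
    have "((\<lambda>x. x ^ n / fact n) has_real_derivative (of_nat n * x ^ (n - 1) / fact n)) (at x within S)"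
      by (auto intro!: derivative_eq_intros)
    from has_vector_derivative_scaleR[OF this has_vector_derivative_const[of "mpow A n"]]
    show ?thesis unfolding f_def[abs_def] by (simp add: d_def has_vector_derivative_def)
  qed
  have ul: "uniform_limit S (\<lambda>n x. \<Sum>i<n. d i x) (\<lambda>x. suminf (\<lambda>i. d i x)) sequentially"
  proof (rule Weierstrass_m_test)
    fix n x assume "x \<in> S"
    then have x: "\<bar>x\<bar> \<le> R" by (simp add: S_def)
    show "norm (d n x) \<le> Mb n"
    proof (cases n)
      case 0 then show ?thesis by (simp add: d_def Mb_def)
    next
      case (Suc j)
      have "norm (d n x) = (\<bar>x\<bar> ^ j / fact j) * norm (mpow A (Suc j))"
        by (simp add: Suc dSuc power_abs)
      also have "\<dots> \<le> (R ^ j / fact j) * (c * (K * a) ^ Suc j)"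
        using K(2)[of A "Suc j"] x by (intro mult_mono divide_right_mono power_mono) (auto simp: c_def a_def)
      finally show ?thesis by (simp add: Mb_def Suc divide_inverse mult.assoc mult.left_commute)
    qed
  next
    have "summable (\<lambda>j. (c * (K * a)) * (inverse (fact j) * (R * (K * a)) ^ j))"
      by (intro summable_mult summable_exp)
    then have "summable (\<lambda>j. Mb (Suc j))"
      by (rule summable_cong[THEN iffD1, rotated]) (simp add: Mb_def power_mult_distrib algebra_simps)
    then show "summable Mb" by (simp add: summable_Suc_iff)
  qed
  have unif: "\<forall>\<^sub>F n in sequentially. \<forall>x\<in>S. \<forall>h. norm ((\<Sum>i<n. h *\<^sub>R d i x) - h *\<^sub>R G x) \<le> e * norm h"
    if "e > 0" for e
  proof -
    have "\<forall>\<^sub>F n in sequentially. \<forall>x\<in>S. dist (\<Sum>i<n. d i x) (G x) < e"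
      using uniform_limitD[OF ul that] by (simp add: G_def)
    then show ?thesis
    proof eventually_elim
      case (elim n)
      show ?case
      proof (intro ballI allI)
        fix x h assume "x \<in> S"
        have "norm ((\<Sum>i<n. h *\<^sub>R d i x) - h *\<^sub>R G x) = \<bar>h\<bar> * dist (\<Sum>i<n. d i x) (G x)"
          by (simp add: scaleR_sum_right[symmetric] scaleR_diff_right[symmetric] dist_norm)
        also have "\<dots> \<le> \<bar>h\<bar> * e" using elim \<open>x \<in> S\<close> by (intro mult_left_mono) auto
        finally show "norm ((\<Sum>i<n. h *\<^sub>R d i x) - h *\<^sub>R G x) \<le> e * norm h" by (simp add: mult.commute)
      qed
    qed
  qed
  have fsums: "(\<lambda>n. f n x) sums mexp (x *\<^sub>R A)" for x
    using mexp_sums[of "x *\<^sub>R A"] by (simp add: f_def mpow_scale)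
  have tS: "t \<in> S" by (simp add: S_def R_def)
  have tR: "\<bar>t\<bar> < R" by (simp add: R_def)
  obtain g where g: "\<And>x. x \<in> S \<Longrightarrow> (\<lambda>n. f n x) sums g x \<and> (g has_derivative (\<lambda>h. h *\<^sub>R G x)) (at x within S)"
    using has_derivative_series[of S f "\<lambda>n x h. h *\<^sub>R d n x" "\<lambda>x h. h *\<^sub>R G x" t,
        OF _ der unif tS fsums] unfolding S_def by (metis convex_ball)
  have "(g has_derivative (\<lambda>h. h *\<^sub>R G t)) (at t)"
    using g[OF tS] at_within_open[OF tS] by (simp add: S_def)
  then have "((\<lambda>x. mexp (x *\<^sub>R A)) has_derivative (\<lambda>h. h *\<^sub>R G t)) (at t)"
    by (rule has_derivative_transform_within_open[of _ _ _ _ S])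
       (use tS tR in \<open>auto simp: S_def intro!: sums_unique2[OF _ fsums] g[unfolded S_def, THEN conjunct1]\<close>)
  moreover have "G t = A ** mexp (t *\<^sub>R A)"
  proof -
    have "(\<lambda>j. A ** ((1 / fact j) *\<^sub>R mpow (t *\<^sub>R A) j)) sums (A ** mexp (t *\<^sub>R A))"
      by (rule bounded_linear.sums[OF _ mexp_sums]) (simp add: linear_conv_bounded_linear[symmetric] linear_mm_right)
    then have "(\<lambda>j. d (Suc j) t) sums (A ** mexp (t *\<^sub>R A))"
      by (simp add: dSuc mpow_scale matrix_scalar_ac scalar_matrix_assoc[symmetric])
    then have "(\<lambda>j. d j t) sums (A ** mexp (t *\<^sub>R A))"
      using sums_Suc_iff[of "\<lambda>j. d j t", THEN iffD1] by (simp add: d_def)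
    then show ?thesis unfolding G_def by (rule sums_unique[symmetric])
  qed
  ultimately show ?thesis by (simp add: has_vector_derivative_def)
qed



lemma sum_UNIV_Plus:
  "(\<Sum>x\<in>(UNIV::('a::finite + 'b::finite) set). f x) = (\<Sum>a\<in>UNIV. f (Inl a)) + (\<Sum>b\<in>UNIV. f (Inr b))"
  using sum.Plus[of "UNIV::'a set" "UNIV::'b set" f] by (simp add: o_def)

lemma blk_mult:
  fixes X Y :: "real^('n::finite + 'n + 'n)^('n + 'n + 'n)"
  assumes "p \<in> {1,2,3}" "q \<in> {1,2,3}"
  shows "blk p q (X ** Y) = blk p 1 X ** blk 1 q Y + blk p 2 X ** blk 2 q Y + blk p 3 X ** blk 3 q Y"
  using assms
  by (auto simp: vec_eq_iff blk_def matrix_matrix_mult_def sum_UNIV_Plus)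

lemma blk_gen:
  "blk 1 1 (gen N M) = - transpose N" "blk 1 2 (gen N M) = M ** Jmat" "blk 1 3 (gen N M) = 0"
  "blk 2 1 (gen N M) = 0" "blk 2 2 (gen N M) = - transpose N" "blk 2 3 (gen N M) = M"
  "blk 3 1 (gen N M) = 0" "blk 3 2 (gen N M) = 0" "blk 3 3 (gen N M) = N"
  by (simp_all add: vec_eq_iff blk_def gen_def block3_def)

lemma blk_one:
  "blk 1 1 (mat 1::real^('n::finite + 'n + 'n)^('n + 'n + 'n)) = mat 1"
  "blk 2 2 (mat 1::real^('n::finite + 'n + 'n)^('n + 'n + 'n)) = mat 1"
  "blk 3 3 (mat 1::real^('n::finite + 'n + 'n)^('n + 'n + 'n)) = mat 1"
  "blk 2 3 (mat 1::real^('n::finite + 'n + 'n)^('n + 'n + 'n)) = 0"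
  by (simp_all add: vec_eq_iff blk_def mat_def Let_def)

lemma blk_one13: "blk 1 3 (mat 1::real^('n::finite + 'n + 'n)^('n + 'n + 'n)) = 0"
  unfolding blk_def vec_eq_iff Let_def mat_def by simp

lemma bl_blk: "bounded_linear (blk p q :: real^('n::finite + 'n + 'n)^('n + 'n + 'n) \<Rightarrow> _)"
  by (rule linear_conv_bounded_linear[THEN iffD1], rule linearI)
     (auto simp: vec_eq_iff blk_def Let_def)

lemma mexp_zero: "mexp (0::real^'n::finite^'n) = mat 1"
proof -
  have "(\<lambda>k. (1 / fact k) *\<^sub>R mpow (0::real^'n^'n) k) = (\<lambda>k. if k = 0 then mat 1 else 0)"
    by (rule ext, case_tac k) auto
  then have "(\<lambda>k. (1 / fact k) *\<^sub>R mpow (0::real^'n^'n) k) sums mat 1"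
    using sums_single[of 0 "\<lambda>_. mat 1 :: real^'n^'n"] by simp
  then show ?thesis using mexp_sums sums_unique2 by blast
qed

lemma Emat_deriv: "((\<lambda>t. Emat N M t) has_vector_derivative gen N M ** Emat N M t) (at t within S)"
  unfolding Emat_def by (rule has_vector_derivative_at_within[OF mexp_deriv])

lemma Emat_0: "Emat N M 0 = mat 1"
  by (simp add: Emat_def mexp_zero)

lemma blk_deriv:
  assumes "p \<in> {1,2,3}" "q \<in> {1,2,3}"
  shows "((\<lambda>t. blk p q (Emat N M t)) has_vector_derivative
     blk p 1 (gen N M) ** blk 1 q (Emat N M t) + blk p 2 (gen N M) ** blk 2 q (Emat N M t)
     + blk p 3 (gen N M) ** blk 3 q (Emat N M t)) (at t within S)"
  using bounded_linear.has_vector_derivative[OF bl_blk Emat_deriv, of p q N M t S]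
  by (simp add: blk_mult[OF assms])

lemma F3_deriv: "((\<lambda>t. F3 N M t) has_vector_derivative N ** F3 N M t) (at t within S)"
  using blk_deriv[of 3 3 N M t S] by (simp add: F3_def[abs_def] blk_gen[simplified] F3_def)

lemma G2_deriv: "((\<lambda>t. G2 N M t) has_vector_derivative - transpose N ** G2 N M t + M ** F3 N M t) (at t within S)"
  using blk_deriv[of 2 3 N M t S] by (simp add: G2_def[abs_def] blk_gen[simplified] G2_def F3_def)

lemma gamma_deriv: "((\<lambda>t. gamma N M t) has_vector_derivative
    - transpose N ** gamma N M t + (M ** Jmat) ** G2 N M t) (at t within S)"
  using blk_deriv[of 1 3 N M t S] by (simp add: gamma_def[abs_def] blk_gen[simplified] G2_def gamma_def)

lemma F3_0: "F3 N M 0 = mat 1" and G2_0: "G2 N M 0 = 0" and gamma_0: "gamma N M 0 = 0"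
  by (simp_all add: F3_def G2_def gamma_def Emat_0 blk_one blk_one13[simplified])

lemma ident1:
  assumes "0 \<le> t"
  shows "transpose (F3 N M t) ** G2 N M t = integral {0..t} (\<lambda>s. transpose (F3 N M s) ** M ** F3 N M s)"
proof -
  have "((\<lambda>s. transpose (F3 N M s) ** G2 N M s) has_vector_derivative
         transpose (F3 N M s) ** M ** F3 N M s) (at s within {0..t})" for s
  proof -
    have d: "((\<lambda>s. transpose (F3 N M s)) has_vector_derivative transpose (N ** F3 N M s)) (at s within {0..t})"
      by (rule bounded_linear.has_vector_derivative[OF bl_transpose F3_deriv])
    have e: "transpose (F3 N M s) ** (- transpose N ** G2 N M s + M ** F3 N M s) + transpose (N ** F3 N M s) ** G2 N M s
       = transpose (F3 N M s) ** M ** F3 N M s"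
      by (simp add: matrix_add_ldistrib mm_diff_right mm_neg_left mm_neg_right matrix_mul_assoc matrix_transpose_mul)
    from bounded_bilinear.has_vector_derivative[OF bb_mm d G2_deriv[of N M s]]
    show ?thesis unfolding e .
  qed
  from fundamental_theorem_of_calculus[OF assms this]
  show ?thesis by (simp add: G2_0 integral_unique)
qed

lemma ident2:
  assumes "0 \<le> t"
  shows "transpose (F3 N M t) ** gamma N M t = integral {0..t} (\<lambda>s. transpose (F3 N M s) ** M ** Jmat ** G2 N M s)"
proof -
  have "((\<lambda>s. transpose (F3 N M s) ** gamma N M s) has_vector_derivative
         transpose (F3 N M s) ** M ** Jmat ** G2 N M s) (at s within {0..t})" for s
  proof -
    have d: "((\<lambda>s. transpose (F3 N M s)) has_vector_derivative transpose (N ** F3 N M s)) (at s within {0..t})"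
      by (rule bounded_linear.has_vector_derivative[OF bl_transpose F3_deriv])
    have e: "transpose (F3 N M s) ** (- transpose N ** gamma N M s + (M ** Jmat) ** G2 N M s) + transpose (N ** F3 N M s) ** gamma N M s
       = transpose (F3 N M s) ** M ** Jmat ** G2 N M s"
      by (simp add: matrix_add_ldistrib mm_diff_right mm_neg_left mm_neg_right matrix_mul_assoc matrix_transpose_mul)
    from bounded_bilinear.has_vector_derivative[OF bb_mm d gamma_deriv[of N M s]]
    show ?thesis unfolding e .
  qed
  from fundamental_theorem_of_calculus[OF assms this]
  show ?thesis by (simp add: gamma_0 integral_unique)
qed



lemma gen_add: "gen (N1 + N2) (M1 + M2) = gen N1 M1 + gen N2 M2"
  by (simp add: vec_eq_iff gen_def block3_def mm_add_left transpose_add split: sum.split)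

lemma gen_scale: "gen (c *\<^sub>R N) (c *\<^sub>R M) = c *\<^sub>R gen N M"
  by (simp add: vec_eq_iff gen_def block3_def transpose_scalar scalar_matrix_assoc[symmetric] split: sum.split)

lemma bl_gen: "bounded_linear (\<lambda>p. gen (fst p) (snd p))"
  by (rule linear_conv_bounded_linear[THEN iffD1], rule linearI)
     (simp_all add: gen_add gen_scale)

lemma continuous_on_gen:
  assumes "continuous_on S f" "continuous_on S g"
  shows "continuous_on S (\<lambda>x. gen (f x) (g x))"
  using continuous_on_compose[OF continuous_on_Pair[OF assms] bounded_linear.continuous_on[OF bl_gen continuous_on_id]]
  by (simp add: o_def)

lemma joint_cont:
  assumes "continuous_on UNIV N" "continuous_on UNIV M"
  shows "continuous_on UNIV (\<lambda>p. Emat (N (fst p)) (M (fst p)) (snd p))"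
  unfolding Emat_def
  by (intro continuous_on_mexp continuous_on_scaleR continuous_on_snd continuous_on_id continuous_on_gen
        continuous_on_compose2[OF assms(1) continuous_on_fst[OF continuous_on_id]]
        continuous_on_compose2[OF assms(2) continuous_on_fst[OF continuous_on_id]]) auto

lemma deriv_zero_prod:
  fixes Z D :: "real \<Rightarrow> real^'n::finite^'n"
  assumes D: "(D has_vector_derivative D') (at x)" and D0: "D x = 0" and Z: "isCont Z x"
  shows "((\<lambda>k. Z k ** D k) has_vector_derivative Z x ** D') (at x)"
proof -
  have lim: "((\<lambda>y. ((D y - D x) - (y - x) *\<^sub>R D') /\<^sub>R norm (y - x)) \<longlongrightarrow> 0) (at x)"
    using D unfolding has_vector_derivative_def has_derivative_at_within by simp
  have Zl: "(Z \<longlongrightarrow> Z x) (at x)" using Z isCont_def by blast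
  have t1: "((\<lambda>y. Z y ** (((D y - D x) - (y - x) *\<^sub>R D') /\<^sub>R norm (y - x))) \<longlongrightarrow> 0) (at x)"
    using bounded_bilinear.tendsto[OF bb_mm Zl lim] by simp
  have t2: "((\<lambda>y. ((y - x) / norm (y - x)) *\<^sub>R ((Z y - Z x) ** D')) \<longlongrightarrow> 0) (at x)"
  proof (rule Lim_null_comparison)
    show "\<forall>\<^sub>F y in at x. norm (((y - x) / norm (y - x)) *\<^sub>R ((Z y - Z x) ** D')) \<le> norm ((Z y - Z x) ** D')"
    proof (rule eventuallyI)
      fix y
      have "\<bar>(y - x) / norm (y - x)\<bar> \<le> 1" by (cases "y = x") auto
      then show "norm (((y - x) / norm (y - x)) *\<^sub>R ((Z y - Z x) ** D')) \<le> norm ((Z y - Z x) ** D')"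
        by (simp add: mult_left_le_one_le)
    qed
    have "((\<lambda>y. (Z y - Z x) ** D') \<longlongrightarrow> (Z x - Z x) ** D') (at x)"
      by (intro bounded_bilinear.tendsto[OF bb_mm] tendsto_diff Zl tendsto_const)
    then show "((\<lambda>y. norm ((Z y - Z x) ** D')) \<longlongrightarrow> 0) (at x)"
      using tendsto_norm_zero by fastforce
  qed
  have eq: "((Z y ** D y - Z x ** D x) - (y - x) *\<^sub>R (Z x ** D')) /\<^sub>R norm (y - x) =
      Z y ** (((D y - D x) - (y - x) *\<^sub>R D') /\<^sub>R norm (y - x)) + ((y - x) / norm (y - x)) *\<^sub>R ((Z y - Z x) ** D')" for y
    by (simp add: D0 matrix_add_ldistrib mm_diff_right mm_diff_left matrix_scalar_ac scalar_matrix_assoc[symmetric] algebra_simps divide_inverse)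
  have "((\<lambda>y. ((Z y ** D y - Z x ** D x) - (y - x) *\<^sub>R (Z x ** D')) /\<^sub>R norm (y - x)) \<longlongrightarrow> 0) (at x)"
    unfolding eq using tendsto_add_zero[OF t1 t2] .
  then show ?thesis
    unfolding has_vector_derivative_def has_derivative_at_within
    by (simp add: bounded_linear_scaleR_left)
qed



theorem lemmaA2:
  fixes N N' M M' :: "real \<Rightarrow> real^('m::finite+'m)^('m+'m)" and H lam :: real
  assumes dN: "\<And>l. (N has_vector_derivative N' l) (at l)" and cN: "continuous_on UNIV N'"
    and dM: "\<And>l. (M has_vector_derivative M' l) (at l)" and cM: "continuous_on UNIV M'"
    and H: "0 \<le> H"
    and symM: "\<And>l. transpose (M l) = M l"
    and inv: "\<And>l s. s \<in> {0..H} \<Longrightarrow>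
                transpose (F2 (N l) (M l) s) ** F3 (N l) (M l) s = mat 1"
    and dF3: "\<And>l s. s \<in> {0..H} \<Longrightarrow>
                ((\<lambda>k. F3 (N k) (M k) s) has_vector_derivative
                   - (Jmat ** G2 (N l) (M l) s)) (at l)"
  shows "((\<lambda>k. G2 (N k) (M k) H) has_vector_derivative
           F2 (N lam) (M lam) H **
             ( - transpose (transpose (F3 (N lam) (M lam) H) ** gamma (N lam) (M lam) H)
               - transpose (F3 (N lam) (M lam) H) ** gamma (N lam) (M lam) H
               + integral {0..H} (\<lambda>s. transpose (F3 (N lam) (M lam) s) ** M' lam ** F3 (N lam) (M lam) s)
               - transpose (- (Jmat ** G2 (N lam) (M lam) H)) ** G2 (N lam) (M lam) H)) (at lam)"
proof -
  have contN: "continuous_on UNIV N"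
    using dN by (intro continuous_at_imp_continuous_on ballI has_vector_derivative_continuous) auto
  have contM: "continuous_on UNIV M"
    using dM by (intro continuous_at_imp_continuous_on ballI has_vector_derivative_continuous) auto
  have jc: "continuous_on UNIV (\<lambda>p. Emat (N (fst p)) (M (fst p)) (snd p))"
    by (rule joint_cont[OF contN contM])
  have cblk: "continuous_on UNIV (\<lambda>p. blk a b (Emat (N (fst p)) (M (fst p)) (snd p)))" for a b
    using bounded_linear.continuous_on[OF bl_blk jc] .
  have cF3: "continuous_on UNIV (\<lambda>p. F3 (N (fst p)) (M (fst p)) (snd p))"
    using cblk[of 3 3] by (simp add: F3_def)
  have cG2: "continuous_on UNIV (\<lambda>p. G2 (N (fst p)) (M (fst p)) (snd p))"
    using cblk[of 2 3] by (simp add: G2_def)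
  have cF2: "continuous_on UNIV (\<lambda>p. F2 (N (fst p)) (M (fst p)) (snd p))"
    using cblk[of 2 2] by (simp add: F2_def)
  have cMf: "continuous_on UNIV (\<lambda>p::real\<times>real. M (fst p))"
    by (rule continuous_on_compose2[OF contM continuous_on_fst[OF continuous_on_id]]) auto
  have cM'f: "continuous_on UNIV (\<lambda>p::real\<times>real. M' (fst p))"
    by (rule continuous_on_compose2[OF cM continuous_on_fst[OF continuous_on_id]]) auto
  note bbc = bounded_bilinear.continuous_on[OF bb_mm]
  note blt = bounded_linear.continuous_on[OF bl_transpose]

  define T where "T l s = transpose (F3 (N l) (M l) s)" for l s
  define JG where "JG l s = - (Jmat ** G2 (N l) (M l) s)" for l s
  define fx where "fx l s = T l s ** M l ** JG l s + (T l s ** M' l + transpose (JG l s) ** M l) ** F3 (N l) (M l) s" for l s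
  define P where "P l = integral {0..H} (\<lambda>s. T l s ** M l ** F3 (N l) (M l) s)" for l

  have cfx: "continuous_on UNIV (\<lambda>p. fx (fst p) (snd p))"
    unfolding fx_def T_def JG_def
    by (intro continuous_intros bbc blt cF3 cG2 cMf cM'f continuous_on_const)
  have cint: "continuous_on UNIV (\<lambda>p. T (fst p) (snd p) ** M (fst p) ** F3 (N (fst p)) (M (fst p)) (snd p))"
    unfolding T_def by (intro bbc blt cF3 cMf)

  have Pder: "(P has_vector_derivative integral {0..H} (fx lam)) (at lam)"
  proof -
    have "((\<lambda>l. integral (cbox 0 H) (\<lambda>s. T l s ** M l ** F3 (N l) (M l) s)) has_vector_derivative
            integral (cbox 0 H) (fx lam)) (at lam within UNIV)"
    proof (rule leibniz_rule_vector_derivative)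
      fix l s assume "s \<in> cbox 0 H"
      then have s: "s \<in> {0..H}" by simp
      have dT: "((\<lambda>l. T l s) has_vector_derivative transpose (JG l s)) (at l within UNIV)"
        unfolding T_def JG_def by (rule bounded_linear.has_vector_derivative[OF bl_transpose dF3[OF s]])
      have d3: "((\<lambda>l. F3 (N l) (M l) s) has_vector_derivative JG l s) (at l within UNIV)"
        unfolding JG_def using dF3[OF s] by simp
      show "((\<lambda>l. T l s ** M l ** F3 (N l) (M l) s) has_vector_derivative fx l s) (at l within UNIV)"
        unfolding fx_def
        by (rule bounded_bilinear.has_vector_derivative[OF bb_mm
              bounded_bilinear.has_vector_derivative[OF bb_mm dT dM[of l]] d3])
    next
      fix l
      have "continuous_on {0..H} (\<lambda>s. T l s ** M l ** F3 (N l) (M l) s)"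
        by (rule continuous_on_compose2[OF cint, of _ "\<lambda>s. (l, s)", simplified])
           (auto intro: continuous_intros)
      then show "(\<lambda>s. T l s ** M l ** F3 (N l) (M l) s) integrable_on cbox 0 H"
        by (simp add: integrable_continuous_interval)
    next
      show "continuous_on (UNIV \<times> cbox 0 H) (\<lambda>(l, s). fx l s)"
        using continuous_on_subset[OF cfx] by (simp add: case_prod_beta')
    qed auto
    then show ?thesis by (simp add: P_def[abs_def])
  qed
  have HH: "H \<in> {0..H}" using H by simp
  define X where "X k = T k H" for k
  define Y where "Y k = G2 (N k) (M k) H" for k
  define Z where "Z k = F2 (N k) (M k) H" for k
  have XYP: "X k ** Y k = P k" for k
    unfolding X_def Y_def P_def T_def by (rule ident1[OF H])
  have ZX: "Z k ** X k = mat 1" for k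
  proof -
    have "F3 (N k) (M k) H ** transpose (Z k) = mat 1"
      using inv[OF HH, of k] matrix_left_right_inverse unfolding Z_def by blast
    then have "transpose (F3 (N k) (M k) H ** transpose (Z k)) = mat 1" by simp
    then show ?thesis by (simp add: matrix_transpose_mul X_def T_def)
  qed
  have Zc: "isCont Z lam"
  proof -
    have "continuous_on UNIV Z"
      unfolding Z_def
      by (rule continuous_on_compose2[OF cF2, of _ "\<lambda>k. (k, H)", simplified]) (auto intro: continuous_intros)
    then show ?thesis using continuous_on_eq_continuous_at open_UNIV by blast
  qed
  have Xder: "(X has_vector_derivative transpose (JG lam H)) (at lam)"
    unfolding X_def[abs_def] T_def JG_def by (rule bounded_linear.has_vector_derivative[OF bl_transpose dF3[OF HH]])
  define Dd where "Dd k = P k - P lam - (X k - X lam) ** Y lam" for k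
  have bll: "bounded_linear (\<lambda>A::real^('m+'m)^('m+'m). A ** Y lam)"
    using linear_mm_left linear_conv_bounded_linear by blast
  have "((\<lambda>k. X k - X lam) has_vector_derivative transpose (JG lam H)) (at lam)"
    using has_vector_derivative_diff[OF Xder has_vector_derivative_const] by simp
  from bounded_linear.has_vector_derivative[OF bll this]
  have "((\<lambda>k. (X k - X lam) ** Y lam) has_vector_derivative transpose (JG lam H) ** Y lam) (at lam)" .
  from has_vector_derivative_diff[OF has_vector_derivative_diff[OF Pder has_vector_derivative_const] this]
  have Dder: "(Dd has_vector_derivative (integral {0..H} (fx lam) - transpose (JG lam H) ** Y lam)) (at lam)"
    unfolding Dd_def[abs_def] by simp
  have D0: "Dd lam = 0" by (simp add: Dd_def)
  have YZ: "Y k = Y lam + Z k ** Dd k" for k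
  proof -
    have "Z k ** Dd k = Y k - Y lam"
      unfolding Dd_def XYP[symmetric]
      by (simp add: mm_diff_right mm_diff_left matrix_mul_assoc ZX)
    then show ?thesis by simp
  qed
  have "((\<lambda>k. Y lam + Z k ** Dd k) has_vector_derivative Z lam ** (integral {0..H} (fx lam) - transpose (JG lam H) ** Y lam)) (at lam)"
    using has_vector_derivative_add[OF has_vector_derivative_const deriv_zero_prod[OF Dder D0 Zc]] by simp
  then have Yder: "(Y has_vector_derivative Z lam ** (integral {0..H} (fx lam) - transpose (JG lam H) ** Y lam)) (at lam)"
    using YZ by (metis (no_types, lifting) ext)
  define W where "W s = T lam s ** M lam ** Jmat ** G2 (N lam) (M lam) s" for s
  define T2 where "T2 s = T lam s ** M' lam ** F3 (N lam) (M lam) s" for s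
  have fxeq: "fx lam s = T2 s - W s - transpose (W s)" for s
    by (simp add: fx_def T2_def W_def T_def JG_def transpose_neg matrix_transpose_mul symM mm_neg_left
        mm_neg_right mm_add_left mm_diff_left matrix_mul_assoc algebra_simps)
  have cs: "continuous_on {0..H} (\<lambda>s. f (lam, s))" if "continuous_on UNIV f" for f :: "real \<times> real \<Rightarrow> real^('m+'m)^('m+'m)"
    by (rule continuous_on_compose2[OF that, of _ "\<lambda>s. (lam, s)"]) (auto intro: continuous_intros)
  have iW: "W integrable_on {0..H}"
  proof -
    have "continuous_on UNIV (\<lambda>p. T (fst p) (snd p) ** M (fst p) ** Jmat ** G2 (N (fst p)) (M (fst p)) (snd p))"
      unfolding T_def by (intro bbc blt cF3 cG2 cMf continuous_on_const)
    from cs[OF this] show ?thesis unfolding W_def[abs_def] by (simp add: integrable_continuous_interval)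
  qed
  have iT2: "T2 integrable_on {0..H}"
  proof -
    have "continuous_on UNIV (\<lambda>p. T (fst p) (snd p) ** M' (fst p) ** F3 (N (fst p)) (M (fst p)) (snd p))"
      unfolding T_def by (intro bbc blt cF3 cM'f)
    from cs[OF this] show ?thesis unfolding T2_def[abs_def] by (simp add: integrable_continuous_interval)
  qed
  have iWt: "(\<lambda>s. transpose (W s)) integrable_on {0..H}"
    using integrable_linear[OF iW bl_transpose] by (simp add: o_def)
  have intW: "integral {0..H} W = transpose (F3 (N lam) (M lam) H) ** gamma (N lam) (M lam) H"
    unfolding W_def T_def by (rule ident2[OF H, symmetric])
  have intWt: "integral {0..H} (\<lambda>s. transpose (W s)) = transpose (integral {0..H} W)"
    using integral_linear[OF iW bl_transpose] by (simp add: o_def)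
  have Pval: "integral {0..H} (fx lam) = integral {0..H} T2 - integral {0..H} W - transpose (integral {0..H} W)"
    unfolding fxeq[abs_def]
    by (simp add: integral_diff iT2 iW iWt integrable_diff intWt)
  show ?thesis
    using Yder unfolding Y_def[abs_def] Z_def Pval intW
    by (simp add: T2_def[abs_def] T_def JG_def algebra_simps)
qed

end
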